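(* Let $0<q<1$ and take $p=q$. Let $\tilde P_n(x)=\sum_{k=0}^n\tilde b_{k,n}x^k$ be the orthonormal polynomials (positive leading coefficients) for the moment sequence $\tilde s_0=q^{-1/2}(1-(1-q))=q^{1/2}$, $\tilde s_n=(q;q)_nq^{-(n+1)^2/2}$ ($n\ge1$), and let $b_{k,n}=(-1)^{n+k}q^{n/2+1/4}\begin{bmatrix}n\\k\end{bmatrix}_q\frac{q^{k^2+k/2}}{(q;q)_k}$ be the coefficients of the orthonormal polynomials for $s_n=(q;q)_nq^{-(n+1)^2/2}$. Then for $0\le k\le n$, \[ \tilde b_{k,n}=\tilde C_n (-1)^k\begin{bmatrix}n\\k\end{bmatrix}_q \frac{q^{k^2+k/2}}{(q;q)_{k+1}}\left[1-q^{k+1}-(1-q^k)(1-q^{n+1})\right],\qquad \tilde C_n=(-1)^n q^{-n/2-1/4}, \] i.e. $\tilde b_{k,n}=b_{k,n}\,q^{-n-1/2}\left[1-\frac{(1-q^k)(1-q^{n+1})}{1-q^{k+1}}\right]$. Moreover $\tilde D_n=q^{n+1}D_n$ where $D_n=\det(s_{i+j})_{0\le i,j\le n}$, $\tilde D_n=\det(\tilde s_{i+j})_{0\le i,j\le n}$. Finally, the monic polynomials $\tilde p_n=\tilde P_n/\tilde b_{n,n}$ satisfy $\tilde p_n(x)=(x-\tilde c_n)\tilde p_{n-1}(x)-\tilde\lambda_n\tilde p_{n-2}(x)$ ($n\ge1$, $\tilde p_{-1}=0$, $\tilde p_0=1$) with \[ \tilde c_n=\left(1+q^3-(1+q^2)q^n\right)q^{-2n-1/2},\qquad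 \tilde \lambda_{n+1}=(1-q^n)^2q^{-4n}. \]
   Context: $(a;q)_n=\prod_{k=1}^n(1-aq^{k-1})$ for $n\in\{0,1,\dots\}\cup\{\infty\}$; $\begin{bmatrix}n\\k\end{bmatrix}_q=\frac{(q;q)_n}{(q;q)_k(q;q)_{n-k}}$. Orthonormal polynomials for a positive definite moment sequence $(u_n)$ are $P_n(x)=\frac{1}{\sqrt{E_{n-1}E_n}}\det\begin{pmatrix}u_0&\cdots&u_n\\ \vdots&&\vdots\\ u_{n-1}&\cdots&u_{2n-1}\\ 1&\cdots&x^n\end{pmatrix}$, $E_n=\det(u_{i+j})_{0\le i,j\le n}$, $E_{-1}=1$. *)

theory Defs
  imports "HOL-Computational_Algebra.Polynomial" "Jordan_Normal_Form.Determinant"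
begin

definition qpoch :: "real \<Rightarrow> real \<Rightarrow> nat \<Rightarrow> real" where
  "qpoch a q n = (\<Prod>k<n. 1 - a * q ^ k)"

definition qbinom :: "real \<Rightarrow> nat \<Rightarrow> nat \<Rightarrow> real" where
  "qbinom q n k = qpoch q q n / (qpoch q q k * qpoch q q (n - k))"

text \<open>Hankel determinant of size m: det (u_{i+j})_{0<=i,j<m}.
  Hence E_n = hankel_det u (n+1), and E_{-1} = hankel_det u 0 = 1.\<close>
definition hankel_det :: "(nat \<Rightarrow> real) \<Rightarrow> nat \<Rightarrow> real" where
  "hankel_det u m = det (mat m m (\<lambda>(i, j). u (i + j)))"

definition orthonormal_poly :: "(nat \<Rightarrow> real) \<Rightarrow> nat \<Rightarrow> real poly" where
  "orthonormal_poly u n =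
     smult (1 / sqrt (hankel_det u n * hankel_det u (Suc n)))
       (det (mat (Suc n) (Suc n)
          (\<lambda>(i, j). if i < n then [:u (i + j):] else monom 1 j)))"

definition mom_s :: "real \<Rightarrow> nat \<Rightarrow> real" where
  "mom_s q n = qpoch q q n * q powr (- (real (n + 1))\<^sup>2 / 2)"

definition mom_st :: "real \<Rightarrow> nat \<Rightarrow> real" where
  "mom_st q n = (if n = 0 then q powr (-1/2) * (1 - (1 - q)) else mom_s q n)"

end

theory Submission
  imports Defs
begin

lemma det_tri_mult:
  fixes M :: "'a::comm_ring_1 mat" and C :: "nat \<Rightarrow> nat \<Rightarrow> 'a"
  assumes M: "M \<in> carrier_mat m m"
    and orth: "\<And>i k. i < k \<Longrightarrow> k < m \<Longrightarrow> (\<Sum>j<m. M $$ (i, j) * C k j) = 0"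
    and tri: "\<And>k j. k < j \<Longrightarrow> j < m \<Longrightarrow> C k j = 0"
  shows "det M * (\<Prod>k<m. C k k) = (\<Prod>k<m. \<Sum>j<m. M $$ (k, j) * C k j)"
proof -
  define B where "B = mat m m (\<lambda>(j, k). C k j)"
  have B: "B \<in> carrier_mat m m" unfolding B_def by simp
  have dB: "det B = (\<Prod>k<m. C k k)"
    by (subst det_upper_triangular[OF _ B]) 
       (auto simp: B_def upper_triangular_def prod_list_diag_prod tri atLeast0LessThan)
  have ent: "(M * B) $$ (i, k) = (\<Sum>j<m. M $$ (i, j) * C k j)" if "i < m" "k < m" for i k
    using that M by (auto simp: B_def scalar_prod_def atLeast0LessThan intro!: sum.cong)
  have MB: "M * B \<in> carrier_mat m m" using M B by simp
  have "det (M * B) = (\<Prod>k<m. \<Sum>j<m. M $$ (k, j) * C k j)"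
    by (subst det_lower_triangular[OF _ MB]) 
       (use M in \<open>auto simp: ent orth prod_list_diag_prod atLeast0LessThan intro!: prod.cong\<close>)
  moreover have "det (M * B) = det M * det B" by (rule det_mult[OF M B])
  ultimately show ?thesis using dB by simp
qed


lemma hankel_from_orth:
  fixes u :: "nat \<Rightarrow> real" and c :: "nat \<Rightarrow> nat \<Rightarrow> real"
  assumes tri: "\<And>k j. k < j \<Longrightarrow> c k j = 0"
    and orth: "\<And>i k. i < k \<Longrightarrow> (\<Sum>j\<le>k. c k j * u (i + j)) = 0"
  shows "hankel_det u m * (\<Prod>k<m. c k k) = (\<Prod>k<m. \<Sum>j\<le>k. c k j * u (k + j))"
proof -
  have sm: "(\<Sum>j<m. u (i + j) * c k j) = (\<Sum>j\<le>k. c k j * u (i + j))" if "k < m" for i k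
  proof -
    have "(\<Sum>j<m. u (i + j) * c k j) = (\<Sum>j\<le>k. u (i + j) * c k j)"
      by (rule sum.mono_neutral_right) (use that tri in auto)
    then show ?thesis by (simp add: mult.commute)
  qed
  have "det (mat m m (\<lambda>(i, j). u (i + j))) * (\<Prod>k<m. c k k)
        = (\<Prod>k<m. \<Sum>j<m. mat m m (\<lambda>(i, j). u (i + j)) $$ (k, j) * c k j)"
    by (rule det_tri_mult) (auto simp: sm orth tri)
  also have "\<dots> = (\<Prod>k<m. \<Sum>j\<le>k. c k j * u (k + j))"
    by (rule prod.cong) (auto simp: sm[symmetric] intro!: sum.cong)
  finally show ?thesis unfolding hankel_det_def .
qed

lemma detpoly_from_orth:
  fixes u :: "nat \<Rightarrow> real" and c :: "nat \<Rightarrow> nat \<Rightarrow> real"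
  assumes tri: "\<And>k j. k < j \<Longrightarrow> c k j = 0"
    and orth: "\<And>i k. i < k \<Longrightarrow> (\<Sum>j\<le>k. c k j * u (i + j)) = 0"
  shows "det (mat (Suc n) (Suc n) (\<lambda>(i, j). if i < n then [:u (i + j):] else monom 1 j))
           * [:\<Prod>k\<le>n. c k k:]
         = [:\<Prod>k<n. \<Sum>j\<le>k. c k j * u (k + j):] * (\<Sum>j\<le>n. monom (c n j) j)"
proof -
  let ?M = "mat (Suc n) (Suc n) (\<lambda>(i, j). if i < n then [:u (i + j):] else monom 1 j)"
  let ?C = "\<lambda>k j. [:c k j:]"
  have sm: "(\<Sum>j<Suc n. u (i + j) * c k j) = (\<Sum>j\<le>k. c k j * u (i + j))" if "k < Suc n" for i k
  proof -
    have "(\<Sum>j<Suc n. u (i + j) * c k j) = (\<Sum>j\<le>k. u (i + j) * c k j)"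
      by (rule sum.mono_neutral_right) (use that tri in auto)
    then show ?thesis by (simp add: mult.commute)
  qed
  have row: "(\<Sum>j<Suc n. ?M $$ (i, j) * ?C k j) = [:\<Sum>j\<le>k. c k j * u (i + j):]"
    if "i < n" "k < Suc n" for i k
  proof -
    have "(\<Sum>j<Suc n. ?M $$ (i, j) * ?C k j) = (\<Sum>j<Suc n. [:u (i + j) * c k j:])"
      using that by (intro sum.cong) auto
    also have "\<dots> = [:\<Sum>j<Suc n. u (i + j) * c k j:]"
      by (simp add: sum_to_poly)
    finally show ?thesis using sm[OF that(2)] by simp
  qed
  have lrow: "(\<Sum>j<Suc n. ?M $$ (n, j) * ?C k j) = (\<Sum>j\<le>k. monom (c k j) j)"
    if "k < Suc n" for k
  proof -
    have "(\<Sum>j<Suc n. ?M $$ (n, j) * ?C k j) = (\<Sum>j<Suc n. monom (c k j) j)"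
      by (intro sum.cong) (auto simp: smult_monom)
    also have "\<dots> = (\<Sum>j\<le>k. monom (c k j) j)"
      by (rule sum.mono_neutral_right) (use that tri in auto)
    finally show ?thesis .
  qed
  have "det ?M * (\<Prod>k<Suc n. ?C k k) = (\<Prod>k<Suc n. \<Sum>j<Suc n. ?M $$ (k, j) * ?C k j)"
  proof (rule det_tri_mult)
    fix i k assume "i < k" "k < Suc n"
    then show "(\<Sum>j<Suc n. ?M $$ (i, j) * ?C k j) = 0"
      using row[of i k] orth[of i k] by simp
  qed (auto simp: tri)
  also have "\<dots> = (\<Prod>k<n. [:\<Sum>j\<le>k. c k j * u (k + j):]) * (\<Sum>j\<le>n. monom (c n j) j)"
  proof -
    have "(\<Prod>k<n. \<Sum>j<Suc n. ?M $$ (k, j) * ?C k j) = (\<Prod>k<n. [:\<Sum>j\<le>k. c k j * u (k + j):])"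
      by (rule prod.cong[OF refl], rule row) auto
    then show ?thesis by (simp only: prod.lessThan_Suc lrow[OF lessI])
  qed
  finally show ?thesis
    by (simp add: lessThan_Suc_atMost prod_to_poly)
qed


lemma hankel_closed:
  fixes u :: "nat \<Rightarrow> real" and c :: "nat \<Rightarrow> nat \<Rightarrow> real"
  assumes tri: "\<And>k j. k < j \<Longrightarrow> c k j = 0"
    and orth: "\<And>i k. i < k \<Longrightarrow> (\<Sum>j\<le>k. c k j * u (i + j)) = 0"
    and g: "\<And>k. g k = (\<Sum>j\<le>k. c k j * u (k + j))"
    and nz: "\<And>k. c k k \<noteq> 0"
  shows "hankel_det u m = (\<Prod>k<m. g k / c k k)"
proof -
  have "hankel_det u m * (\<Prod>k<m. c k k) = (\<Prod>k<m. g k)"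
    using hankel_from_orth[OF tri orth, of m] g by simp
  moreover have "(\<Prod>k<m. c k k) \<noteq> 0" using nz by simp
  ultimately show ?thesis by (simp add: prod_dividef field_simps)
qed

lemma orthonormal_closed:
  fixes u :: "nat \<Rightarrow> real" and c :: "nat \<Rightarrow> nat \<Rightarrow> real"
  assumes tri: "\<And>k j. k < j \<Longrightarrow> c k j = 0"
    and orth: "\<And>i k. i < k \<Longrightarrow> (\<Sum>j\<le>k. c k j * u (i + j)) = 0"
    and g: "\<And>k. g k = (\<Sum>j\<le>k. c k j * u (k + j))"
    and nz: "\<And>k. c k k \<noteq> 0"
    and pos: "\<And>k. g k / c k k > 0"
  shows "orthonormal_poly u n = smult (1 / (c n n * sqrt (g n / c n n))) (\<Sum>j\<le>n. monom (c n j) j)"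
proof -
  define E where "E = (\<Prod>k<n. g k / c k k)"
  have E0: "E > 0" unfolding E_def using pos by (intro prod_pos) auto
  have hn: "hankel_det u n = E" unfolding E_def by (rule hankel_closed[OF tri orth g nz])
  have hs: "hankel_det u (Suc n) = E * (g n / c n n)" unfolding E_def
    using hankel_closed[OF tri orth g nz, of "Suc n"] by (simp only: prod.lessThan_Suc)
  have D: "det (mat (Suc n) (Suc n) (\<lambda>(i, j). if i < n then [:u (i + j):] else monom 1 j))
           * [:\<Prod>k\<le>n. c k k:] = [:\<Prod>k<n. g k:] * (\<Sum>j\<le>n. monom (c n j) j)"
    using detpoly_from_orth[OF tri orth, of n] g by simp
  have pc: "(\<Prod>k\<le>n. c k k) \<noteq> 0" using nz by simp
  have Gq: "(\<Prod>k<n. g k) = E * (\<Prod>k<n. c k k)" unfolding E_def using nz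
    by (simp add: prod_dividef)
  have Pc: "(\<Prod>k\<le>n. c k k) = (\<Prod>k<n. c k k) * c n n"
    by (simp only: lessThan_Suc_atMost[symmetric] prod.lessThan_Suc)
  let ?D = "det (mat (Suc n) (Suc n) (\<lambda>(i, j). if i < n then [:u (i + j):] else monom 1 j))"
  let ?P = "\<Sum>j\<le>n. monom (c n j) j"
  have "smult (\<Prod>k\<le>n. c k k) ?D = smult (\<Prod>k<n. g k) ?P"
    using D by (simp add: mult.commute)
  also have "\<dots> = smult (\<Prod>k\<le>n. c k k) (smult (E / c n n) ?P)"
    unfolding Gq Pc smult_smult using nz[of n] by (simp add: field_simps)
  finally have D2: "?D = smult (E / c n n) ?P" using pc by (rule smult_cancel[rotated])
  have sq: "sqrt (hankel_det u n * hankel_det u (Suc n)) = E * sqrt (g n / c n n)"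
  proof -
    have "hankel_det u n * hankel_det u (Suc n) = E\<^sup>2 * (g n / c n n)"
      by (simp add: hn hs power2_eq_square)
    then show ?thesis using E0 by (metis abs_of_pos real_sqrt_abs real_sqrt_mult)
  qed
  show ?thesis unfolding orthonormal_poly_def sq D2
    using E0 by (simp add: smult_smult field_simps)
qed


lemma qpoch_Suc: "qpoch a q (Suc n) = qpoch a q n * (1 - a * q ^ n)"
  by (simp add: qpoch_def)

lemma qpoch_Suc': "qpoch a q (Suc n) = (1 - a) * qpoch (a * q) q n"
  unfolding qpoch_def by (subst prod.lessThan_Suc_shift) (simp add: mult.assoc)

lemma qpoch_0[simp]: "qpoch a q 0 = 1" by (simp add: qpoch_def)

definition qb :: "real \<Rightarrow> nat \<Rightarrow> nat \<Rightarrow> real" where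
  "qb q n k = (if k \<le> n then qbinom q n k else 0)"

context fixes q :: real assumes q0: "0 < q" and q1: "q < 1"
begin

lemma qpow_lt1: "q ^ Suc k < 1"
proof -
  have "q ^ k \<le> 1" using q0 q1 by (intro power_le_one) auto
  then have "q * q ^ k \<le> q" using q0 by (simp add: mult_left_le)
  then show ?thesis using q1 by simp
qed

lemma qpoch_pos: "qpoch q q n > 0"
  unfolding qpoch_def
proof (intro prod_pos ballI)
  fix k assume "k \<in> {..<n}"
  have "q * q ^ k < 1" using qpow_lt1[of k] by simp
  then show "0 < 1 - q * q ^ k" by simp
qed

lemma qbinom_pascal:
  assumes "k < n"
  shows "qbinom q (Suc n) (Suc k) = qbinom q n k + q ^ Suc k * qbinom q n (Suc k)"
proof -
  obtain m where n: "n = Suc (k + m)" using assms by (metis less_iff_Suc_add)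
  have nk: "Suc n - Suc k = Suc m" "n - k = Suc m" "n - Suc k = m" using n by auto
  define A where "A = q ^ k"
  define B where "B = q ^ m"
  have e1: "q ^ Suc n = q * q * A * B" unfolding n A_def B_def by (simp add: power_add)
  have e2: "q ^ Suc k = q * A" unfolding A_def by simp
  have e3: "q ^ Suc m = q * B" unfolding B_def by simp
  have pk: "qpoch q q (Suc k) = qpoch q q k * (1 - q * A)" by (simp add: qpoch_Suc A_def)
  have pm: "qpoch q q (Suc m) = qpoch q q m * (1 - q * B)" by (simp add: qpoch_Suc B_def)
  have pn: "qpoch q q (Suc n) = qpoch q q n * (1 - q * q * A * B)"
    using e1 by (simp add: qpoch_Suc)
  have nzA: "1 - q * A \<noteq> 0" using qpow_lt1[of k] unfolding A_def by simp
  have nzB: "1 - q * B \<noteq> 0" using qpow_lt1[of m] unfolding B_def by simp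
  have p1: "qpoch q q k \<noteq> 0" "qpoch q q m \<noteq> 0" "qpoch q q n \<noteq> 0"
    using qpoch_pos by (auto simp: less_le)
  define C where "C = 1 - q * A"
  define D where "D = 1 - q * B"
  have CD: "1 - q * q * A * B = C + q * A * D" unfolding C_def D_def by (simp add: algebra_simps)
  show ?thesis unfolding qbinom_def nk pk pm pn e2 CD C_def[symmetric] D_def[symmetric]
    using nzA nzB p1 unfolding C_def[symmetric] D_def[symmetric] by (simp add: field_simps)
qed


lemma qbinom_0[simp]: "qbinom q n 0 = 1"
  unfolding qbinom_def using qpoch_pos[of n] by simp

lemma qbinom_n[simp]: "qbinom q n n = 1"
  unfolding qbinom_def using qpoch_pos[of n] by simp

lemma qb_pascal: "qb q (Suc n) (Suc k) = qb q n k + q ^ Suc k * qb q n (Suc k)"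
proof (cases "k < n")
  case True then show ?thesis using qbinom_pascal[OF True] by (simp add: qb_def)
next
  case False
  then show ?thesis by (cases "k = n") (auto simp: qb_def)
qed

end


definition qw :: "real \<Rightarrow> nat \<Rightarrow> real" where "qw q k = q powr (real k * (real k - 1) / 2)"

context fixes q :: real assumes q0: "0 < q" and q1: "q < 1"
begin


lemma w0[simp]: "qw q 0 = 1" using q0 by (simp add: qw_def)

lemma wSuc: "qw q (Suc k) = qw q k * q ^ k"
proof -
  have "qw q (Suc k) = q powr (real k * (real k - 1) / 2 + real k)"
    unfolding qw_def by (rule arg_cong[where f="\<lambda>x. q powr x"]) (simp add: field_simps)
  also have "\<dots> = qw q k * q ^ k" unfolding qw_def using q0 by (simp add: powr_add powr_realpow)
  finally show ?thesis .
qed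

lemma qb_zero: "n < k \<Longrightarrow> qb q n k = 0" by (simp add: qb_def)

lemma qbin_thm: "(\<Sum>k\<le>n. (-1) ^ k * qb q n k * qw q k * z ^ k) = qpoch z q n"
proof (induction n arbitrary: z)
  case 0 then show ?case by (simp add: qb_def q0 q1)
next
  case (Suc n)
  define Gq where "Gq = (\<lambda>m. (-1) ^ m * qb q n m * qw q m * (q * z) ^ m)"
  have f: "(-1) ^ Suc k * qb q (Suc n) (Suc k) * qw q (Suc k) * z ^ Suc k
      = - z * Gq k + Gq (Suc k)" for k
    unfolding Gq_def qb_pascal[OF q0 q1] wSuc
    by (simp add: algebra_simps power_mult_distrib)
  have "(\<Sum>k\<le>Suc n. (-1) ^ k * qb q (Suc n) k * qw q k * z ^ k)
      = 1 + (\<Sum>k\<le>n. - z * Gq k + Gq (Suc k))"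
    by (subst sum.atMost_Suc_shift, simp only: f) (simp add: qb_def q0 q1)
  also have "\<dots> = 1 - z * (\<Sum>k\<le>n. Gq k) + (\<Sum>k\<le>n. Gq (Suc k))"
    by (simp add: sum.distrib sum_distrib_left sum_negf sum_subtractf)
  also have "(\<Sum>k\<le>n. Gq (Suc k)) = (\<Sum>k\<le>Suc n. Gq k) - Gq 0"
    by (subst sum.atMost_Suc_shift) simp
  also have "(\<Sum>k\<le>Suc n. Gq k) = (\<Sum>k\<le>n. Gq k)"
    by (simp add: Gq_def qb_zero)
  also have "Gq 0 = 1" by (simp add: Gq_def qb_def q0 q1)
  also have "(\<Sum>k\<le>n. Gq k) = qpoch (z * q) q n"
    using Suc.IH[of "q * z"] by (simp add: Gq_def mult.commute)
  finally show ?case by (simp add: qpoch_Suc' algebra_simps)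
qed

end


definition Fq :: "real \<Rightarrow> nat \<Rightarrow> real poly" where
  "Fq q i = (\<Prod>j<i. [:- (q ^ Suc j), 1:])"

lemma qpoch_add: "qpoch a q (k + i) = qpoch a q k * (\<Prod>j<i. 1 - a * q ^ (k + j))"
  by (induction i) (simp_all add: qpoch_Suc)

context fixes q :: real assumes q0: "0 < q" and q1: "q < 1"
begin

lemma pw_int: "q ^ n = q powr real n" using q0 by (simp add: powr_realpow)

lemma pw_inv: "(1 / q) ^ n = q powr (- real n)"
  using q0 by (simp add: powr_minus_divide powr_realpow power_one_over)

lemma powr_cong: "a = b \<Longrightarrow> q powr a = q powr b" by simp

lemma poly_F: "poly (Fq q i) ((1/q) ^ k) = (1/q) ^ (k * i) * (\<Prod>j<i. 1 - q * q ^ (k + j))"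
proof -
  have "poly (Fq q i) ((1/q) ^ k) = (\<Prod>j<i. (1/q) ^ k - q ^ Suc j)"
    by (simp add: Fq_def poly_prod)
  also have "\<dots> = (\<Prod>j<i. (1/q) ^ k * (1 - q * q ^ (k + j)))"
  proof (rule prod.cong[OF refl])
    fix j
    have "(1/q) ^ k * q ^ k = 1" using q0 by (simp add: power_one_over)
    then show "(1/q) ^ k - q ^ Suc j = (1/q) ^ k * (1 - q * q ^ (k + j))"
      by (simp add: algebra_simps power_add)
  qed
  also have "\<dots> = (1/q) ^ (k * i) * (\<Prod>j<i. 1 - q * q ^ (k + j))"
    by (simp add: prod.distrib power_mult)
  finally show ?thesis .
qed

lemma term_s:
  assumes "k \<le> n"
  shows "(-1) ^ k * qbinom q n k * q powr (real k ^ 2 + real k / 2) / qpoch q q k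
          * (qpoch q q (i + k) * q powr (- (real (i + k + 1))\<^sup>2 / 2))
       = q powr (- (real (i + 1))\<^sup>2 / 2) * ((-1) ^ k * qb q n k * qw q k * poly (Fq q i) ((1/q) ^ k))"
proof -
  have pk: "qpoch q q k \<noteq> 0" using qpoch_pos[OF q0 q1, of k] by simp
  have e: "q powr (real k ^ 2 + real k / 2) * q powr (- (real (i + k + 1))\<^sup>2 / 2)
        = q powr (- (real (i + 1))\<^sup>2 / 2) * qw q k * (1/q) ^ (k * i)"
    unfolding pw_inv qw_def powr_add[symmetric]
    by (rule powr_cong) (simp add: field_simps power2_eq_square)
  let ?P = "\<Prod>j<i. 1 - q * q ^ (k + j)"
  have "(-1) ^ k * qbinom q n k * q powr (real k ^ 2 + real k / 2) / qpoch q q k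
          * (qpoch q q (i + k) * q powr (- (real (i + k + 1))\<^sup>2 / 2))
      = (-1) ^ k * qbinom q n k * ?P * (q powr (real k ^ 2 + real k / 2) * q powr (- (real (i + k + 1))\<^sup>2 / 2))"
    unfolding qpoch_add[of q q k i, unfolded add.commute[of k i]] using pk by simp
  also have "\<dots> = (-1) ^ k * qbinom q n k * ?P * (q powr (- (real (i + 1))\<^sup>2 / 2) * qw q k * (1/q) ^ (k * i))"
    unfolding e ..
  also have "\<dots> = q powr (- (real (i + 1))\<^sup>2 / 2) * ((-1) ^ k * qb q n k * qw q k * poly (Fq q i) ((1/q) ^ k))"
    unfolding poly_F using assms by (simp add: qb_def mult_ac)
  finally show ?thesis .
qed

end


definition Pprod :: "(nat \<Rightarrow> real) \<Rightarrow> nat \<Rightarrow> real poly" where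
  "Pprod a m = (\<Prod>j<m. [:- a j, 1:])"

lemma Pi_Suc: "Pprod a (Suc m) = Pprod a m * [:- a m, 1:]"
  by (simp add: Pprod_def)

lemma coeff_mult_lin: "coeff ((p::real poly) * [:c, 1:]) j = c * coeff p j + (case j of 0 \<Rightarrow> 0 | Suc i \<Rightarrow> coeff p i)"
  by (cases j) (simp_all add: mult_pCons_right coeff_pCons)

lemma Pi_deg: "degree (Pprod a m) \<le> m"
proof (induction m)
  case 0 then show ?case by (simp add: Pprod_def)
next
  case (Suc m)
  have "degree (Pprod a (Suc m)) \<le> degree (Pprod a m) + degree [:- a m, 1:]"
    unfolding Pi_Suc by (rule degree_mult_le)
  then show ?case using Suc by simp
qed

lemma Pi_lead: "coeff (Pprod a m) m = 1"
proof (induction m)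
  case 0 then show ?case by (simp add: Pprod_def)
next
  case (Suc m)
  have "coeff (Pprod a m) (Suc m) = 0" using Pi_deg[of a m] by (simp add: coeff_eq_0)
  then show ?case unfolding Pi_Suc coeff_mult_lin using Suc by simp
qed

lemma Pi_sub: "coeff (Pprod a (Suc m)) m = - (\<Sum>j<Suc m. a j)"
proof (induction m)
  case 0 then show ?case by (simp add: Pprod_def)
next
  case (Suc m)
  have "coeff (Pprod a (Suc m)) (Suc m) = 1" by (rule Pi_lead)
  then show ?case unfolding Pi_Suc[of a "Suc m"] coeff_mult_lin using Suc by simp
qed

lemma F_Pi: "Fq q i = Pprod (\<lambda>j. q ^ Suc j) i" by (simp add: Fq_def Pprod_def)

context fixes q :: real assumes q0: "0 < q" and q1: "q < 1"
begin

lemma poly_bound: fixes f :: "real poly" assumes "degree f \<le> N" shows "poly f x = (\<Sum>m\<le>N. coeff f m * x ^ m)"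
  unfolding poly_altdef by (rule sum.mono_neutral_left) (use assms in \<open>auto simp: coeff_eq_0\<close>)

lemma qS_poly:
  assumes "degree f \<le> N"
  shows "(\<Sum>k\<le>n. (-1) ^ k * qb q n k * qw q k * poly f ((1/q) ^ k))
       = (\<Sum>m\<le>N. coeff f m * qpoch ((1/q) ^ m) q n)"
proof -
  have "(\<Sum>k\<le>n. (-1) ^ k * qb q n k * qw q k * poly f ((1/q) ^ k))
      = (\<Sum>k\<le>n. \<Sum>m\<le>N. coeff f m * ((-1) ^ k * qb q n k * qw q k * ((1/q) ^ m) ^ k))"
    unfolding poly_bound[OF assms] sum_distrib_left
    by (intro sum.cong refl) (simp add: power_mult[symmetric] mult.commute mult_ac)
  also have "\<dots> = (\<Sum>m\<le>N. coeff f m * (\<Sum>k\<le>n. (-1) ^ k * qb q n k * qw q k * ((1/q) ^ m) ^ k))"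
    by (subst sum.swap) (simp add: sum_distrib_left)
  also have "\<dots> = (\<Sum>m\<le>N. coeff f m * qpoch ((1/q) ^ m) q n)"
    by (simp add: qbin_thm[OF q0 q1])
  finally show ?thesis .
qed

lemma qpoch_vanish: "m < n \<Longrightarrow> qpoch ((1/q) ^ m) q n = 0"
  unfolding qpoch_def using q0
  by (intro prod_zero) (auto intro!: bexI[of _ m] simp: power_one_over)

lemma qS_deg:
  assumes "degree f \<le> n"
  shows "(\<Sum>k\<le>n. (-1) ^ k * qb q n k * qw q k * poly f ((1/q) ^ k))
       = coeff f n * qpoch ((1/q) ^ n) q n"
  unfolding qS_poly[OF assms]
  by (cases n) (simp_all add: qpoch_vanish)

lemma qS_deg1:
  assumes "degree f \<le> Suc n"
  shows "(\<Sum>k\<le>n. (-1) ^ k * qb q n k * qw q k * poly f ((1/q) ^ k))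
       = coeff f n * qpoch ((1/q) ^ n) q n + coeff f (Suc n) * qpoch ((1/q) ^ Suc n) q n"
  unfolding qS_poly[OF assms]
  by (cases n) (simp_all add: qpoch_vanish)

end


context fixes q :: real assumes q0: "0 < q" and q1: "q < 1"
begin

lemma inv_pow_cancel: "(1/q) ^ a * q ^ a = 1"
  using q0 by (simp add: power_one_over)

lemma Qd: "qpoch ((1/q) ^ (n + d)) q n
    = (-1) ^ n * (\<Prod>j<n. (1/q) ^ (j + 1 + d)) * (\<Prod>j<n. 1 - q ^ (j + 1 + d))"
proof -
  have "qpoch ((1/q) ^ (n + d)) q n = (\<Prod>j<n. 1 - (1/q) ^ (n + d) * q ^ (n - Suc j))"
    unfolding qpoch_def by (rule prod.nat_diff_reindex[symmetric])
  also have "\<dots> = (\<Prod>j<n. (-1) * ((1/q) ^ (j + 1 + d) * (1 - q ^ (j + 1 + d))))"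
  proof (rule prod.cong[OF refl])
    fix j assume "j \<in> {..<n}"
    then have nn: "n + d = (n - Suc j) + (j + 1 + d)" by simp
    have "(1/q) ^ (n + d) * q ^ (n - Suc j) = (1/q) ^ (j + 1 + d)"
      unfolding nn power_add using inv_pow_cancel[of "n - Suc j"] by (simp add: mult_ac)
    moreover have "\<And>X Y::real. X * Y = 1 \<Longrightarrow> 1 - X = (-1) * (X * (1 - Y))" by (simp add: algebra_simps)
    ultimately show "1 - (1/q) ^ (n + d) * q ^ (n - Suc j) = (-1) * ((1/q) ^ (j + 1 + d) * (1 - q ^ (j + 1 + d)))"
      using inv_pow_cancel[of "j + 1 + d"] by metis
  qed
  also have "\<dots> = (-1) ^ n * (\<Prod>j<n. (1/q) ^ (j + 1 + d)) * (\<Prod>j<n. 1 - q ^ (j + 1 + d))"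
    by (simp only: prod.distrib prod_constant card_lessThan)
  finally show ?thesis .
qed

lemma prod_invpow: "(\<Prod>j<n. (1/q) ^ (j + 1 + d)) = q powr (- (real n * (real n + 1) / 2 + real n * real d))"
proof (induction n)
  case 0 then show ?case using q0 by simp
next
  case (Suc n)
  have "(\<Prod>j<Suc n. (1/q) ^ (j + 1 + d)) = (\<Prod>j<n. (1/q) ^ (j + 1 + d)) * (1/q) ^ (n + 1 + d)"
    by (rule prod.lessThan_Suc)
  also have "\<dots> = q powr (- (real n * (real n + 1) / 2 + real n * real d)) * q powr (- real (n + 1 + d))"
    by (subst Suc.IH) (simp only: pw_inv[OF q0 q1])
  also have "\<dots> = q powr (- (real (Suc n) * (real (Suc n) + 1) / 2 + real (Suc n) * real d))"
    unfolding powr_add[symmetric] by (rule powr_cong[OF q0 q1]) (simp add: field_simps)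
  finally show ?case .
qed

lemma Q0: "qpoch ((1/q) ^ n) q n = (-1) ^ n * q powr (- (real n * (real n + 1) / 2)) * qpoch q q n"
proof -
  have a: "(\<Prod>j<n. 1 - q ^ (j + 1 + 0)) = qpoch q q n" by (simp add: qpoch_def)
  have b: "- (real n * (real n + 1) / 2 + real n * real (0::nat)) = - (real n * (real n + 1) / 2)"
    by simp
  show ?thesis using Qd[of n 0, unfolded add_0_right] prod_invpow[where n=n and d=0, unfolded b] a
    by (simp only: add_0_right)
qed

lemma Q1: "qpoch ((1/q) ^ Suc n) q n = (-1) ^ n * q powr (- (real n * (real n + 3) / 2)) * (qpoch q q (Suc n) / (1 - q))"
proof -
  have "(\<Prod>j<n. 1 - q ^ (j + 1 + 1)) = qpoch (q * q) q n" by (simp add: qpoch_def mult_ac)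
  also have "\<dots> = qpoch q q (Suc n) / (1 - q)" using q1 by (simp add: qpoch_Suc')
  finally have a: "(\<Prod>j<n. 1 - q ^ (j + 1 + 1)) = qpoch q q (Suc n) / (1 - q)" .
  have b: "- (real n * (real n + 1) / 2 + real n * real (1::nat)) = - (real n * (real n + 3) / 2)"
    by (simp add: field_simps)
  have c: "n + 1 = Suc n" by simp
  show ?thesis using Qd[of n 1, unfolded c] prod_invpow[where n=n and d=1, unfolded b] a by (simp only:)
qed

end


definition cs :: "real \<Rightarrow> nat \<Rightarrow> nat \<Rightarrow> real" where
  "cs q n k = (if k \<le> n then (-1) ^ k * qbinom q n k * q powr (real k ^ 2 + real k / 2) / qpoch q q k else 0)"

definition hs :: "real \<Rightarrow> nat \<Rightarrow> real" where
  "hs q n = (qpoch q q n)\<^sup>2 * q powr (- 2 * real n ^ 2 - 2 * real n - 1/2)"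

context fixes q :: real assumes q0: "0 < q" and q1: "q < 1"
begin

lemma F_deg: "degree (Fq q i) \<le> i" unfolding F_Pi by (rule Pi_deg)
lemma F_lead: "coeff (Fq q i) i = 1" unfolding F_Pi by (rule Pi_lead)

lemma s_V: "(\<Sum>j\<le>n. cs q n j * mom_s q (i + j))
    = q powr (- (real (i + 1))\<^sup>2 / 2) * (\<Sum>k\<le>n. (-1) ^ k * qb q n k * qw q k * poly (Fq q i) ((1/q) ^ k))"
  unfolding sum_distrib_left
proof (intro sum.cong refl)
  fix x assume x: "x \<in> {..n}"
  then have "x \<le> n" by simp
  then show "cs q n x * mom_s q (i + x) = q powr (- (real (i + 1))\<^sup>2 / 2) * ((-1) ^ x * qb q n x * qw q x * poly (Fq q i) ((1/q) ^ x))"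
    by (simp only: cs_def mom_s_def if_P) (rule term_s[OF q0 q1])
qed

lemma s_orth: "i < n \<Longrightarrow> (\<Sum>j\<le>n. cs q n j * mom_s q (i + j)) = 0"
  unfolding s_V using F_deg[of i]
  by (subst qS_deg[OF q0 q1]) (auto simp: coeff_eq_0)

lemma s_g: "(\<Sum>j\<le>n. cs q n j * mom_s q (n + j)) = q powr (- (real (n + 1))\<^sup>2 / 2) * qpoch ((1/q) ^ n) q n"
  unfolding s_V using F_deg[of n]
  by (subst qS_deg[OF q0 q1]) (auto simp: F_lead)

lemma cs_nn: "cs q n n = (-1) ^ n * q powr (real n ^ 2 + real n / 2) / qpoch q q n"
  by (simp add: cs_def qbinom_n[OF q0 q1])

lemma s_h: "(\<Sum>j\<le>n. cs q n j * mom_s q (n + j)) / cs q n n = hs q n"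
proof -
  have pn: "qpoch q q n > 0" by (rule qpoch_pos[OF q0 q1])
  have e: "q powr (- (real (n + 1))\<^sup>2 / 2) * q powr (- (real n * (real n + 1) / 2))
      = q powr (- 2 * real n ^ 2 - 2 * real n - 1/2) * q powr (real n ^ 2 + real n / 2)"
    unfolding powr_add[symmetric] by (rule powr_cong[OF q0 q1]) (simp add: field_simps power2_eq_square)
  have "(\<Sum>j\<le>n. cs q n j * mom_s q (n + j)) / cs q n n
      = (q powr (- (real (n + 1))\<^sup>2 / 2) * q powr (- (real n * (real n + 1) / 2)))
        * (qpoch q q n * qpoch q q n) / q powr (real n ^ 2 + real n / 2) * ((-1) ^ n * (-1) ^ n)"
    unfolding s_g Q0[OF q0 q1] cs_nn using pn by (simp add: field_simps)
  also have "\<dots> = hs q n" unfolding e hs_def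
    by (simp add: power2_eq_square power_mult_distrib[symmetric])
  finally show ?thesis .
qed

lemma hs_pos: "hs q n > 0" unfolding hs_def using qpoch_pos[OF q0 q1, of n] q0 by simp

lemma cs_nz: "cs q n n \<noteq> 0" unfolding cs_nn using qpoch_pos[OF q0 q1, of n] q0 by simp

lemma cs_tri: "k < j \<Longrightarrow> cs q k j = 0" by (simp add: cs_def)

lemma hankel_s: "hankel_det (mom_s q) m = (\<Prod>k<m. hs q k)"
proof -
  have "hankel_det (mom_s q) m = (\<Prod>k<m. (\<Sum>j\<le>k. cs q k j * mom_s q (k + j)) / cs q k k)"
    by (rule hankel_closed[where c = "cs q" and g = "\<lambda>k. \<Sum>j\<le>k. cs q k j * mom_s q (k + j)"])
       (simp_all add: cs_tri s_orth cs_nz)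
  then show ?thesis by (simp add: s_h)
qed

end


definition cT :: "real \<Rightarrow> nat \<Rightarrow> nat \<Rightarrow> real" where
  "cT q n k = (if k \<le> n then (-1) ^ k * qbinom q n k * q powr (real k ^ 2 + real k / 2) / qpoch q q (k + 1)
                  * (1 - q ^ (k + 1) - (1 - q ^ k) * (1 - q ^ (n + 1))) else 0)"

definition Gq :: "real \<Rightarrow> nat \<Rightarrow> nat \<Rightarrow> real poly" where
  "Gq q n i = [:1 - q - q ^ (n + 1), q ^ (n + 1):] * Pprod (\<lambda>j. q ^ (j + 2)) i"

lemma coeff_lin_mult: "coeff ([:a, b:] * (p :: real poly)) j = a * coeff p j + b * (case j of 0 \<Rightarrow> 0 | Suc i \<Rightarrow> coeff p i)"
  by (cases j) (simp_all add: coeff_pCons)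

context fixes q :: real assumes q0: "0 < q" and q1: "q < 1"
begin

lemma poly_Pi2: "poly (Pprod (\<lambda>j. q ^ (j + 2)) i) ((1/q) ^ k) = (1/q) ^ (k * i) * (\<Prod>j<i. 1 - q * q ^ (k + 1 + j))"
proof -
  have "poly (Pprod (\<lambda>j. q ^ (j + 2)) i) ((1/q) ^ k) = (\<Prod>j<i. (1/q) ^ k - q ^ (j + 2))"
    by (simp add: Pprod_def poly_prod)
  also have "\<dots> = (\<Prod>j<i. (1/q) ^ k * (1 - q * q ^ (k + 1 + j)))"
  proof (rule prod.cong[OF refl])
    fix j
    have "(1/q) ^ k * q ^ k = 1" using q0 by (simp add: power_one_over)
    then show "(1/q) ^ k - q ^ (j + 2) = (1/q) ^ k * (1 - q * q ^ (k + 1 + j))"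
      by (simp add: algebra_simps power_add)
  qed
  also have "\<dots> = (1/q) ^ (k * i) * (\<Prod>j<i. 1 - q * q ^ (k + 1 + j))"
    by (simp add: prod.distrib power_mult)
  finally show ?thesis .
qed

lemma term_t:
  assumes "k \<le> n"
  shows "cT q n k * mom_s q (Suc i + k)
       = q powr (- (real (i + 2))\<^sup>2 / 2) * ((-1) ^ k * qb q n k * qw q k * poly (Gq q n i) ((1/q) ^ k))"
proof -
  have pk: "qpoch q q (k + 1) \<noteq> 0" using qpoch_pos[OF q0 q1, of "k+1"] by simp
  let ?P = "\<Prod>j<i. 1 - q * q ^ (k + 1 + j)"
  let ?L = "1 - q - q ^ (n + 1) + q ^ (n + 1) * (1/q) ^ k"
  have B: "1 - q ^ (k + 1) - (1 - q ^ k) * (1 - q ^ (n + 1)) = q ^ k * ?L"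
  proof -
    have "q ^ k * (1/q) ^ k = 1" using q0 by (simp add: power_one_over)
    then show ?thesis by (simp add: algebra_simps power_add)
  qed
  have qp: "qpoch q q (Suc i + k) = qpoch q q (k + 1) * ?P"
    using qpoch_add[of q q "k + 1" i] by (simp add: add.commute)
  have e: "q powr (real k ^ 2 + real k / 2) * q powr (- (real (Suc i + k + 1))\<^sup>2 / 2) * q ^ k
        = q powr (- (real (i + 2))\<^sup>2 / 2) * qw q k * (1/q) ^ (k * i)"
    unfolding pw_inv[OF q0 q1] pw_int[OF q0 q1] qw_def powr_add[symmetric]
    by (rule powr_cong[OF q0 q1]) (simp add: field_simps power2_eq_square)
  have "cT q n k * mom_s q (Suc i + k)
      = (-1) ^ k * qbinom q n k * ?P * ?L * (q powr (real k ^ 2 + real k / 2) * q powr (- (real (Suc i + k + 1))\<^sup>2 / 2) * q ^ k)"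
    unfolding cT_def mom_s_def qp B using assms pk by (simp add: field_simps)
  also have "\<dots> = (-1) ^ k * qbinom q n k * ?P * ?L * (q powr (- (real (i + 2))\<^sup>2 / 2) * qw q k * (1/q) ^ (k * i))"
    unfolding e ..
  also have "\<dots> = q powr (- (real (i + 2))\<^sup>2 / 2) * ((-1) ^ k * qb q n k * qw q k * poly (Gq q n i) ((1/q) ^ k))"
    unfolding Gq_def poly_mult poly_Pi2 using assms by (simp add: qb_def mult_ac)
  finally show ?thesis .
qed

end


definition sig :: "real \<Rightarrow> nat \<Rightarrow> real" where "sig q n = (\<Sum>j<n. q ^ (j + 2))"

lemma G_deg: "degree (Gq q n i) \<le> Suc i"
proof -
  have "degree (Gq q n i) \<le> degree [:1 - q - q ^ (n + 1), q ^ (n + 1):] + degree (Pprod (\<lambda>j. q ^ (j + 2)) i)"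
    unfolding Gq_def by (rule degree_mult_le)
  also have "\<dots> \<le> 1 + i" using Pi_deg[of "\<lambda>j. q ^ (j + 2)" i] by (intro add_mono) auto
  finally show ?thesis by simp
qed

lemma G_top: "coeff (Gq q n i) (Suc i) = q ^ (n + 1)"
proof -
  have "coeff (Pprod (\<lambda>j. q ^ (j + 2)) i) (Suc i) = 0" using Pi_deg[of "\<lambda>j. q ^ (j + 2)" i] by (simp add: coeff_eq_0)
  then show ?thesis unfolding Gq_def coeff_lin_mult by (simp add: Pi_lead)
qed

lemma G_sub: "coeff (Gq q n i) i = 1 - q - q ^ (n + 1) - q ^ (n + 1) * sig q i"
proof (cases i)
  case 0 then show ?thesis by (simp add: Gq_def coeff_lin_mult Pi_lead sig_def)
next
  case (Suc m)
  then show ?thesis unfolding Gq_def coeff_lin_mult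
    by (simp add: Pi_lead Pi_sub sig_def algebra_simps)
qed

context fixes q :: real assumes q0: "0 < q" and q1: "q < 1"
begin

lemma t_V: "(\<Sum>j\<le>n. cT q n j * mom_st q (Suc i + j))
    = q powr (- (real (i + 2))\<^sup>2 / 2) * (\<Sum>k\<le>n. (-1) ^ k * qb q n k * qw q k * poly (Gq q n i) ((1/q) ^ k))"
  unfolding sum_distrib_left
proof (intro sum.cong refl)
  fix x assume "x \<in> {..n}"
  then have "x \<le> n" by simp
  then show "cT q n x * mom_st q (Suc i + x) = q powr (- (real (i + 2))\<^sup>2 / 2) * ((-1) ^ x * qb q n x * qw q x * poly (Gq q n i) ((1/q) ^ x))"
  proof -
    have "mom_st q (Suc i + x) = mom_s q (Suc i + x)" by (simp add: mom_st_def)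
    then show ?thesis using \<open>x \<le> n\<close> by (simp only: term_t[OF q0 q1])
  qed
qed

lemma t_orth: "Suc i < n \<Longrightarrow> (\<Sum>j\<le>n. cT q n j * mom_st q (Suc i + j)) = 0"
  unfolding t_V using G_deg[of q n i]
  by (subst qS_deg[OF q0 q1]) (auto simp: coeff_eq_0)

lemma t_g: "(\<Sum>j\<le>Suc m. cT q (Suc m) j * mom_st q (Suc m + j))
     = q powr (- (real (m + 2))\<^sup>2 / 2) * (q ^ (Suc m + 1) * qpoch ((1/q) ^ Suc m) q (Suc m))"
  unfolding t_V using G_deg[of q "Suc m" m]
  by (subst qS_deg[OF q0 q1]) (auto simp: G_top)

lemma t_e: "(\<Sum>j\<le>n. cT q n j * mom_st q (Suc n + j))
     = q powr (- (real (n + 2))\<^sup>2 / 2) * ((1 - q - q ^ (n + 1) - q ^ (n + 1) * sig q n) * qpoch ((1/q) ^ n) q n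
         + q ^ (n + 1) * qpoch ((1/q) ^ Suc n) q n)"
  unfolding t_V using G_deg[of q n n]
  by (subst qS_deg1[OF q0 q1]) (auto simp: G_top G_sub)

end


context fixes q :: real assumes q0: "0 < q" and q1: "q < 1"
begin

lemma qbinom_SS: "k \<le> n \<Longrightarrow> qbinom q (Suc n) (Suc k) = qbinom q n k * (1 - q ^ (n + 1)) / (1 - q ^ (k + 1))"
  unfolding qbinom_def using qpoch_pos[OF q0 q1, of k] qpoch_pos[OF q0 q1, of "n - k"] qpow_lt1[OF q0 q1, of k]
  by (simp add: qpoch_Suc field_simps)

lemma term0: assumes "k \<le> n"
  shows "cT q n k * mom_s q k = q powr (-1/2) * ((-1) ^ k * qw q k * (qbinom q n k - qbinom q (Suc n) (Suc k) * (1 - q ^ k)))"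
proof -
  have pk: "qpoch q q k > 0" by (rule qpoch_pos[OF q0 q1])
  have nz: "1 - q ^ (k + 1) \<noteq> 0" using qpow_lt1[OF q0 q1, of k] by simp
  have e: "q powr (real k ^ 2 + real k / 2) * q powr (- (real (k + 1))\<^sup>2 / 2) = q powr (-1/2) * qw q k"
    unfolding qw_def powr_add[symmetric]
    by (rule powr_cong[OF q0 q1]) (simp add: field_simps power2_eq_square)
  have "cT q n k * mom_s q k = (-1) ^ k * qbinom q n k * (q powr (real k ^ 2 + real k / 2) * q powr (- (real (k + 1))\<^sup>2 / 2))
       * ((1 - q ^ (k + 1) - (1 - q ^ k) * (1 - q ^ (n + 1))) / (1 - q ^ (k + 1)))"
    unfolding cT_def mom_s_def using assms pk nz by (simp add: qpoch_Suc field_simps)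
  also have "\<dots> = q powr (-1/2) * ((-1) ^ k * qw q k * (qbinom q n k - qbinom q (Suc n) (Suc k) * (1 - q ^ k)))"
    unfolding e qbinom_SS[OF assms] using nz by (simp add: field_simps)
  finally show ?thesis .
qed

lemma sumA: "0 < n \<Longrightarrow> (\<Sum>k\<le>n. (-1) ^ k * qw q k * qbinom q n k) = 0"
proof -
  assume n: "0 < n"
  have "(\<Sum>k\<le>n. (-1) ^ k * qw q k * qbinom q n k) = (\<Sum>k\<le>n. (-1) ^ k * qb q n k * qw q k * 1 ^ k)"
    by (intro sum.cong refl) (simp add: qb_def)
  also have "\<dots> = qpoch 1 q n" by (rule qbin_thm[OF q0 q1])
  also have "\<dots> = 0" unfolding qpoch_def using n by (intro prod_zero) (auto intro!: bexI[of _ 0])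
  finally show ?thesis .
qed

lemma sumB: "0 < n \<Longrightarrow> (\<Sum>k\<le>n. (-1) ^ k * qw q k * (qbinom q (Suc n) (Suc k) * (1 - q ^ k))) = q - 1"
proof -
  assume n: "0 < n"
  let ?f = "[:-1, q:]"
  define T where "T = (\<lambda>m. (-1) ^ m * qb q (Suc n) m * qw q m * poly ?f ((1/q) ^ m))"
  have t: "(-1) ^ k * qw q k * (qbinom q (Suc n) (Suc k) * (1 - q ^ k)) = - T (Suc k)" if "k \<le> n" for k
  proof -
    have "q ^ k * (q * (1/q) ^ Suc k) = 1" using q0 by (simp add: power_one_over)
    then show ?thesis unfolding T_def wSuc[OF q0 q1] using that by (simp add: qb_def algebra_simps)
  qed
  have "(\<Sum>k\<le>n. (-1) ^ k * qw q k * (qbinom q (Suc n) (Suc k) * (1 - q ^ k))) = - (\<Sum>k\<le>n. T (Suc k))"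
    by (simp add: t sum_negf)
  also have "(\<Sum>k\<le>n. T (Suc k)) = (\<Sum>k\<le>Suc n. T k) - T 0"
    by (subst sum.atMost_Suc_shift) simp
  also have "(\<Sum>k\<le>Suc n. T k) = coeff ?f (Suc n) * qpoch ((1/q) ^ Suc n) q (Suc n)"
    unfolding T_def using n by (intro qS_deg[OF q0 q1]) auto
  also have "coeff ?f (Suc n) = 0" using n by (cases n) auto
  also have "T 0 = q - 1" by (simp add: T_def qb_def qbinom_0[OF q0 q1] w0[OF q0 q1])
  finally show ?thesis by simp
qed

lemma t_orth0: "0 < n \<Longrightarrow> (\<Sum>j\<le>n. cT q n j * mom_st q (0 + j)) = 0"
proof -
  assume n: "0 < n"
  have c0: "cT q n 0 = 1" using q0 q1 by (simp add: cT_def qbinom_0[OF q0 q1] qpoch_def)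
  have "(\<Sum>j\<le>n. cT q n j * mom_st q (0 + j)) = (\<Sum>j\<le>n. cT q n j * mom_s q j) + cT q n 0 * (mom_st q 0 - mom_s q 0)"
  proof -
    have "(\<Sum>j\<le>n. cT q n j * mom_st q (0 + j)) = (\<Sum>j\<le>n. cT q n j * mom_s q j + (if j = 0 then cT q n 0 * (mom_st q 0 - mom_s q 0) else 0))"
      by (intro sum.cong refl) (auto simp: mom_st_def algebra_simps)
    then show ?thesis by (simp add: sum.distrib)
  qed
  also have "(\<Sum>j\<le>n. cT q n j * mom_s q j) = q powr (-1/2) * ((\<Sum>k\<le>n. (-1) ^ k * qw q k * qbinom q n k)
        - (\<Sum>k\<le>n. (-1) ^ k * qw q k * (qbinom q (Suc n) (Suc k) * (1 - q ^ k))))"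
  proof -
    have "(\<Sum>j\<le>n. cT q n j * mom_s q j) = (\<Sum>k\<le>n. q powr (-1/2) * ((-1) ^ k * qw q k * (qbinom q n k - qbinom q (Suc n) (Suc k) * (1 - q ^ k))))"
      by (intro sum.cong refl) (simp add: term0)
    then show ?thesis by (simp add: sum_distrib_left sum_subtractf algebra_simps sum.distrib)
  qed
  also have "\<dots> = q powr (-1/2) * (1 - q)" using sumA[OF n] sumB[OF n] by simp
  finally show ?thesis using c0 by (simp add: mom_st_def mom_s_def algebra_simps)
qed

end


lemma cT_tri: "k < j \<Longrightarrow> cT q k j = 0" by (simp add: cT_def)

context fixes q :: real assumes q0: "0 < q" and q1: "q < 1"
begin

lemma cT_nn: "cT q n n = q ^ n * cs q n n"
proof -
  have nz: "1 - q ^ (n + 1) \<noteq> 0" using qpow_lt1[OF q0 q1, of n] by simp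
  have b: "1 - q ^ (n + 1) - (1 - q ^ n) * (1 - q ^ (n + 1)) = q ^ n * (1 - q ^ (n + 1))"
    by (simp add: algebra_simps)
  show ?thesis unfolding cT_def cs_def b using nz qpoch_pos[OF q0 q1, of n]
    by (simp add: qpoch_Suc field_simps)
qed

lemma cT_nz: "cT q n n \<noteq> 0" unfolding cT_nn using cs_nz[OF q0 q1, of n] q0 by simp

lemma t_orth_all: "i < k \<Longrightarrow> (\<Sum>j\<le>k. cT q k j * mom_st q (i + j)) = 0"
proof (cases i)
  case 0 then show "i < k \<Longrightarrow> ?thesis" using t_orth0[OF q0 q1, of k] by simp
next
  case (Suc m) then show "i < k \<Longrightarrow> ?thesis" using t_orth[OF q0 q1, of m k] by simp
qed

lemma t_gs: "(\<Sum>j\<le>k. cT q k j * mom_st q (k + j)) = q ^ (k + 1) * (\<Sum>j\<le>k. cs q k j * mom_s q (k + j))"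
proof (cases k)
  case 0
  then show ?thesis using q0 q1 by (simp add: cT_def cs_def mom_st_def mom_s_def qpoch_def qbinom_0[OF q0 q1])
next
  case (Suc m)
  have r: "real (m + 2) = real (Suc m + 1)" by simp
  show ?thesis unfolding Suc t_g[OF q0 q1] s_g[OF q0 q1] r by (simp add: mult_ac)
qed

lemma t_h: "(\<Sum>j\<le>k. cT q k j * mom_st q (k + j)) / cT q k k = q * hs q k"
  unfolding t_gs cT_nn s_h[OF q0 q1, symmetric] using q0 by (simp add: field_simps)

lemma hankel_t: "hankel_det (mom_st q) m = (\<Prod>k<m. q * hs q k)"
proof -
  have "hankel_det (mom_st q) m = (\<Prod>k<m. (\<Sum>j\<le>k. cT q k j * mom_st q (k + j)) / cT q k k)"
    by (rule hankel_closed[where c = "cT q" and g = "\<lambda>k. \<Sum>j\<le>k. cT q k j * mom_st q (k + j)"])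
       (simp_all add: cT_tri t_orth_all cT_nz)
  then show ?thesis by (simp add: t_h)
qed

lemma norm_const: "1 / (cT q n n * sqrt (q * hs q n)) = (-1) ^ n * q powr (- real n / 2 - 1/4)"
proof -
  have pn: "qpoch q q n > 0" by (rule qpoch_pos[OF q0 q1])
  have sq: "sqrt (q * hs q n) = qpoch q q n * q powr (- (real n ^ 2) - real n + 1/4)"
  proof (rule real_sqrt_unique)
    have "(qpoch q q n * q powr (- (real n ^ 2) - real n + 1/4))\<^sup>2
        = (qpoch q q n)\<^sup>2 * (q powr (- (real n ^ 2) - real n + 1/4) * q powr (- (real n ^ 2) - real n + 1/4))"
      by (simp add: power2_eq_square)
    also have "q powr (- (real n ^ 2) - real n + 1/4) * q powr (- (real n ^ 2) - real n + 1/4)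
        = q powr 1 * q powr (- 2 * real n ^ 2 - 2 * real n - 1/2)"
      unfolding powr_add[symmetric] by (rule powr_cong[OF q0 q1]) simp
    finally show "(qpoch q q n * q powr (- (real n ^ 2) - real n + 1/4))\<^sup>2 = q * hs q n"
      unfolding hs_def using q0 by simp
  qed (use pn in simp)
  have e: "q ^ n * q powr (real n ^ 2 + real n / 2) * q powr (- (real n ^ 2) - real n + 1/4)
          = 1 / q powr (- real n / 2 - 1/4)"
    unfolding pw_int[OF q0 q1] powr_add[symmetric] powr_minus_divide[symmetric]
    by (rule powr_cong[OF q0 q1]) (simp add: field_simps)
  have "cT q n n * sqrt (q * hs q n) = (-1) ^ n * (q ^ n * q powr (real n ^ 2 + real n / 2) * q powr (- (real n ^ 2) - real n + 1/4))"
    unfolding cT_nn cs_nn[OF q0 q1] sq using pn by (simp add: field_simps)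
  also have "\<dots> = (-1) ^ n / q powr (- real n / 2 - 1/4)" unfolding e by simp
  finally show ?thesis by (simp add: power_one_over[symmetric] field_simps)
qed

lemma orth_t: "orthonormal_poly (mom_st q) n
    = smult ((-1) ^ n * q powr (- real n / 2 - 1/4)) (\<Sum>j\<le>n. monom (cT q n j) j)"
proof -
  have "orthonormal_poly (mom_st q) n = smult (1 / (cT q n n * sqrt (((\<lambda>k. \<Sum>j\<le>k. cT q k j * mom_st q (k + j)) n) / cT q n n)))
       (\<Sum>j\<le>n. monom (cT q n j) j)"
    by (rule orthonormal_closed[where c = "cT q" and g = "\<lambda>k. \<Sum>j\<le>k. cT q k j * mom_st q (k + j)"])
       (simp_all add: cT_tri t_orth_all cT_nz t_h hs_pos[OF q0 q1] q0)
  then show ?thesis by (simp only: t_h norm_const)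
qed

end


definition Lf :: "(nat \<Rightarrow> real) \<Rightarrow> nat \<Rightarrow> real poly \<Rightarrow> real" where
  "Lf u i R = (\<Sum>j\<le>degree R. coeff R j * u (i + j))"

lemma Lf_bound: "degree R \<le> N \<Longrightarrow> Lf u i R = (\<Sum>j\<le>N. coeff R j * u (i + j))"
  unfolding Lf_def by (rule sum.mono_neutral_left) (auto simp: coeff_eq_0)

lemma Lf_add: "Lf u i (R + S) = Lf u i R + Lf u i S"
proof -
  let ?N = "max (degree R) (degree S)"
  have "degree (R + S) \<le> ?N" by (rule degree_add_le) auto
  then show ?thesis
    by (simp add: Lf_bound[of _ ?N] sum.distrib algebra_simps)
qed

lemma Lf_smult: "Lf u i (smult a R) = a * Lf u i R"
  using Lf_bound[of "smult a R" "degree R"] by (simp add: Lf_def sum_distrib_left mult_ac)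

lemma Lf_diff: "Lf u i (R - S) = Lf u i R - Lf u i S"
proof -
  have "Lf u i (R - S) = Lf u i (R + smult (-1) S)" by simp
  then show ?thesis by (simp only: Lf_add Lf_smult) 
qed

lemma Lf_lin: "Lf u i ([:a, b:] * p) = a * Lf u i p + b * Lf u (Suc i) p"
proof -
  let ?N = "Suc (degree p)"
  have d1: "degree [:a, b:] \<le> 1" by (rule degree_le) (auto simp: coeff_pCons split: nat.split)
  have d: "degree ([:a, b:] * p) \<le> ?N"
    using degree_mult_le[of "[:a, b:]" p] d1 by linarith
  have "Lf u i ([:a, b:] * p) = (\<Sum>j\<le>?N. (a * coeff p j) * u (i + j))
         + (\<Sum>j\<le>?N. (b * (case j of 0 \<Rightarrow> 0 | Suc m \<Rightarrow> coeff p m)) * u (i + j))"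
    unfolding Lf_bound[OF d] coeff_lin_mult by (simp add: sum.distrib algebra_simps)
  also have "(\<Sum>j\<le>?N. (a * coeff p j) * u (i + j)) = a * Lf u i p"
    using Lf_bound[of p ?N u i] by (simp add: sum_distrib_left mult_ac del: sum.atMost_Suc)
  also have "(\<Sum>j\<le>?N. (b * (case j of 0 \<Rightarrow> 0 | Suc m \<Rightarrow> coeff p m)) * u (i + j))
      = b * (\<Sum>m\<le>degree p. coeff p m * u (Suc i + m))"
    by (subst sum.atMost_Suc_shift) (simp add: sum_distrib_left mult_ac)
  also have "(\<Sum>m\<le>degree p. coeff p m * u (Suc i + m)) = Lf u (Suc i) p" by (simp add: Lf_def)
  finally show ?thesis .
qed

lemma coeff_Psum: "coeff (\<Sum>j\<le>n. monom (c j) j) k = (if k \<le> n then c k else 0)"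
  by (simp add: coeff_sum coeff_monom)

lemma deg_Psum: "degree (\<Sum>j\<le>n. monom (c j) j :: real poly) \<le> n"
  by (rule degree_le) (auto simp: coeff_Psum)

lemma Lf_Psum: "Lf u i (\<Sum>j\<le>n. monom (c j) j) = (\<Sum>j\<le>n. c j * u (i + j))"
  by (simp add: Lf_bound[OF deg_Psum] coeff_Psum)

lemma uniq:
  fixes p :: "nat \<Rightarrow> real poly"
  assumes lead: "\<And>k. coeff (p k) k = 1" and deg: "\<And>k. degree (p k) \<le> k"
    and orth: "\<And>k i. i < k \<Longrightarrow> Lf u i (p k) = 0" and h: "\<And>k. Lf u k (p k) \<noteq> 0"
  shows "(\<forall>j\<ge>m. coeff R j = 0) \<Longrightarrow> (\<forall>i<m. Lf u i R = 0) \<Longrightarrow> R = 0"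
proof (induction m arbitrary: R)
  case 0 then show ?case by (simp add: poly_eq_iff)
next
  case (Suc m)
  define c where "c = coeff R m"
  define R' where "R' = R - smult c (p m)"
  have z: "coeff (p m) j = 0" if "m < j" for j using deg[of m] that by (simp add: coeff_eq_0)
  have "\<forall>j\<ge>m. coeff R' j = 0"
  proof (intro allI impI)
    fix j assume "m \<le> j"
    then show "coeff R' j = 0" using Suc.prems(1) lead[of m] z[of j]
      by (cases "j = m") (auto simp: R'_def c_def)
  qed
  moreover have "\<forall>i<m. Lf u i R' = 0"
    using Suc.prems(2) orth[of _ m] by (simp add: R'_def Lf_diff Lf_smult)
  ultimately have "R' = 0" by (rule Suc.IH)
  then have R: "R = smult c (p m)" by (simp add: R'_def)
  have "Lf u m R = 0" using Suc.prems(2) by simp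
  then have "c = 0" using h[of m] by (simp add: R Lf_smult)
  then show ?case using R by simp
qed


definition Br :: "real \<Rightarrow> nat \<Rightarrow> real" where
  "Br q n = 1 - q + q ^ 2 - q ^ (n + 1) - q ^ (n + 3) + q ^ (2 * n + 3)"

lemma sig_closed: "sig q n * (1 - q) = q ^ 2 * (1 - q ^ n)"
proof (induction n)
  case 0 then show ?case by (simp add: sig_def)
next
  case (Suc n)
  have "sig q (Suc n) * (1 - q) = sig q n * (1 - q) + q ^ (n + 2) * (1 - q)"
    by (simp add: sig_def algebra_simps)
  also have "\<dots> = q ^ 2 * (1 - q ^ n) + q ^ (n + 2) * (1 - q)" by (simp only: Suc.IH)
  also have "\<dots> = q ^ 2 * (1 - q ^ Suc n)" by (simp add: algebra_simps power_add power2_eq_square)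
  finally show ?case .
qed

context fixes q :: real assumes q0: "0 < q" and q1: "q < 1"
begin

lemma E_closed: "(\<Sum>j\<le>n. cT q n j * mom_st q (Suc n + j)) / cT q n n
    = (qpoch q q n)\<^sup>2 * q powr (- 2 * (real n + 1)\<^sup>2) * (Br q n / (1 - q))"
proof -
  define A where "A = q powr (- (real (n + 2))\<^sup>2 / 2)"
  define B0 where "B0 = q powr (- (real n * (real n + 1) / 2))"
  define B1 where "B1 = q powr (- (real n * (real n + 3) / 2))"
  define C where "C = q powr (real n ^ 2 + real n / 2)"
  define X where "X = q powr (- 2 * (real n + 1)\<^sup>2)"
  define N where "N = q ^ n"
  define P where "P = qpoch q q n"
  have P0: "P > 0" unfolding P_def by (rule qpoch_pos[OF q0 q1])
  have C0: "C > 0" unfolding C_def using q0 by simp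
  have N0: "N > 0" unfolding N_def using q0 by simp
  have q10: "1 - q \<noteq> 0" using q1 by simp
  have e1: "A * B0 = X * N * C"
    unfolding A_def B0_def X_def N_def C_def pw_int[OF q0 q1] powr_add[symmetric]
    by (rule powr_cong[OF q0 q1]) (simp add: field_simps power2_eq_square)
  have e2: "A * B1 = X * C"
    unfolding A_def B1_def X_def C_def powr_add[symmetric]
    by (rule powr_cong[OF q0 q1]) (simp add: field_simps power2_eq_square)
  define \<beta> where "\<beta> = 1 - q - q * N"
  define \<sigma> where "\<sigma> = sig q n"
  have sg: "\<sigma> = q\<^sup>2 * (1 - N) / (1 - q)" using sig_closed[of q n] q10 unfolding \<sigma>_def N_def
    by (simp add: field_simps)
  have qn1: "q ^ (n + 1) = q * N" by (simp add: N_def)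
  have Q0': "qpoch ((1/q) ^ n) q n = (-1) ^ n * B0 * P" unfolding B0_def P_def by (rule Q0[OF q0 q1])
  have Q1': "qpoch ((1/q) ^ Suc n) q n = (-1) ^ n * B1 * (P * (1 - q * N) / (1 - q))"
    unfolding B1_def P_def N_def using Q1[OF q0 q1, of n] by (simp add: qpoch_Suc)
  have cn: "cT q n n = N * ((-1) ^ n * C / P)"
    unfolding cT_nn[OF q0 q1] cs_nn[OF q0 q1] N_def C_def P_def ..
  have "(\<Sum>j\<le>n. cT q n j * mom_st q (Suc n + j))
      = A * ((\<beta> - q * N * \<sigma>) * ((-1) ^ n * B0 * P) + q * N * ((-1) ^ n * B1 * (P * (1 - q * N) / (1 - q))))"
    unfolding t_e[OF q0 q1] Q0' Q1' qn1 A_def[symmetric] \<beta>_def \<sigma>_def ..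
  also have "\<dots> = (-1) ^ n * P * ((\<beta> - q * N * \<sigma>) * (A * B0) + q * N * (A * B1) * (1 - q * N) / (1 - q))"
    using q10 by (simp add: field_simps)
  also have "\<dots> = (-1) ^ n * P * X * N * C * (\<beta> - q * N * \<sigma> + q * (1 - q * N) / (1 - q))"
    unfolding e1 e2 using q10 by (simp add: field_simps)
  finally have num: "(\<Sum>j\<le>n. cT q n j * mom_st q (Suc n + j)) = (-1) ^ n * P * X * N * C * (\<beta> - q * N * \<sigma> + q * (1 - q * N) / (1 - q))" .
  have br: "\<beta> - q * N * \<sigma> + q * (1 - q * N) / (1 - q) = Br q n / (1 - q)"
  proof -
    have bre: "Br q n = 1 - q + q\<^sup>2 - q * N - q ^ 3 * N + q ^ 3 * N\<^sup>2"
      unfolding Br_def N_def by (simp add: power_add power_mult power2_eq_square mult_ac)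
    have h: "\<sigma> * (1 - q) = q\<^sup>2 * (1 - N)" using sg q10 by simp
    have "(\<beta> - q * N * \<sigma>) * (1 - q) + q * (1 - q * N) = \<beta> * (1 - q) - q * N * (\<sigma> * (1 - q)) + q * (1 - q * N)"
      by (simp add: algebra_simps)
    also have "\<dots> = \<beta> * (1 - q) - q * N * (q\<^sup>2 * (1 - N)) + q * (1 - q * N)" unfolding h ..
    also have "\<dots> = 1 - q + q\<^sup>2 - q * N - q ^ 3 * N + q ^ 3 * N\<^sup>2"
      unfolding \<beta>_def by (simp add: algebra_simps power2_eq_square power3_eq_cube)
    finally have "(\<beta> - q * N * \<sigma>) * (1 - q) + q * (1 - q * N) = Br q n" using bre by simp
    then show ?thesis using q10 by (simp add: field_simps)
  qed
  have sgn: "(-1::real) ^ n \<noteq> 0" by simp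
  show ?thesis unfolding num cn br P_def[symmetric] X_def[symmetric] using P0 C0 N0 q10 sgn
    by (simp add: field_simps power2_eq_square)
qed

end


context fixes q :: real assumes q0: "0 < q" and q1: "q < 1"
begin

definition "HH n = q * hs q n"
definition "EE n = (qpoch q q n)\<^sup>2 * q powr (- 2 * (real n + 1)\<^sup>2) * (Br q n / (1 - q))"
definition "cc n = (1 + q ^ 3 - (1 + q ^ 2) * q ^ n) * q powr (- 2 * real n - 1/2)"
definition "ll n = (1 - q ^ n) ^ 2 * q powr (- 4 * real n)"

lemma id1: "ll (n + 1) * HH n = HH (n + 1)"
proof -
  have e: "q powr (- 4 * real (n + 1)) * q powr (- 2 * real n ^ 2 - 2 * real n - 1/2)
        = q powr (- 2 * real (n + 1) ^ 2 - 2 * real (n + 1) - 1/2)"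
    unfolding powr_add[symmetric] by (rule powr_cong[OF q0 q1]) (simp add: field_simps power2_eq_square)
  have p: "qpoch q q (n + 1) = qpoch q q n * (1 - q ^ (n + 1))" by (simp add: qpoch_Suc)
  show ?thesis unfolding ll_def HH_def hs_def p e[symmetric]
    by (simp add: power_mult_distrib mult_ac)
qed

lemma id3: "EE 0 = cc 1 * HH 0"
proof -
  have e: "q powr (- 2 * 1 - 1/2) * q * q powr (- 1/2) = q powr (- 2)"
  proof -
    have "q powr (- 2 * 1 - 1/2) * q * q powr (- 1/2) = q powr (- 2 * 1 - 1/2) * q powr 1 * q powr (- 1/2)"
      using q0 by simp
    also have "\<dots> = q powr (- 2)" unfolding powr_add[symmetric] by (rule powr_cong[OF q0 q1]) simp
    finally show ?thesis .
  qed
  have q10: "1 - q \<noteq> 0" using q1 by simp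
  have "EE 0 = q powr (- 2) * (1 - q)" unfolding EE_def Br_def using q10
    by (simp add: field_simps power2_eq_square power3_eq_cube)
  moreover have "cc 1 * HH 0 = (1 - q) * (q powr (- 2 * 1 - 1/2) * q * q powr (- 1/2))"
    unfolding cc_def HH_def hs_def by (simp add: algebra_simps power3_eq_cube power2_eq_square)
  ultimately show ?thesis unfolding e by simp
qed

lemma id2: "EE (n + 1) = cc (n + 2) * HH (n + 1) + ll (n + 1) * EE n"
proof -
  define Y where "Y = q powr (- 2 * (real n + 2)\<^sup>2)"
  define N where "N = q ^ n"
  define P where "P = qpoch q q n"
  have q10: "1 - q \<noteq> 0" using q1 by simp
  have p1: "qpoch q q (n + 1) = P * (1 - q * N)" by (simp add: qpoch_Suc P_def N_def)
  have eA: "q powr (- 2 * (real (n + 1) + 1)\<^sup>2) = Y"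
    unfolding Y_def by (rule powr_cong[OF q0 q1]) (simp add: field_simps power2_eq_square)
  have eB: "q powr (- 2 * real (n + 2) - 1/2) * (q * q powr (- 2 * real (n + 1) ^ 2 - 2 * real (n + 1) - 1/2)) = Y"
  proof -
    have "q powr (- 2 * real (n + 2) - 1/2) * (q * q powr (- 2 * real (n + 1) ^ 2 - 2 * real (n + 1) - 1/2))
        = q powr (- 2 * real (n + 2) - 1/2) * (q powr 1 * q powr (- 2 * real (n + 1) ^ 2 - 2 * real (n + 1) - 1/2))"
      using q0 by simp
    also have "\<dots> = Y" unfolding Y_def powr_add[symmetric]
      by (rule powr_cong[OF q0 q1]) (simp add: field_simps power2_eq_square)
    finally show ?thesis .
  qed
  have eC: "q powr (- 4 * real (n + 1)) * q powr (- 2 * (real n + 1)\<^sup>2) = q\<^sup>2 * Y"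
  proof -
    have h2: "q powr 2 = q\<^sup>2" using powr_realpow[OF q0, of 2] by simp
    have "q powr (- 4 * real (n + 1)) * q powr (- 2 * (real n + 1)\<^sup>2) = q powr (2 + (- 2 * (real n + 2)\<^sup>2))"
      unfolding powr_add[symmetric] by (rule powr_cong[OF q0 q1]) (simp add: field_simps power2_eq_square)
    then show ?thesis unfolding Y_def powr_add h2 .
  qed
  have b1: "Br q (n + 1) = 1 - q + q*q - q*q * N - q*q*q*q * N + q*q*q*q*q * N*N"
    unfolding Br_def N_def by (simp add: power_add power_mult_distrib mult_ac numeral_eq_Suc power2_eq_square)
  have b0: "Br q n = 1 - q + q*q - q * N - q*q*q * N + q*q*q * N*N"
    unfolding Br_def N_def by (simp add: power_add power_mult_distrib mult_ac numeral_eq_Suc power2_eq_square)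
  have L: "EE (n + 1) = (P * (1 - q * N))\<^sup>2 * Y * (Br q (n + 1) / (1 - q))"
    unfolding EE_def p1 eA ..
  have R1: "cc (n + 2) * HH (n + 1) = (1 + q ^ 3 - (1 + q ^ 2) * (q\<^sup>2 * N)) * (P * (1 - q * N))\<^sup>2 * Y"
  proof -
    have "cc (n + 2) * HH (n + 1) = (1 + q ^ 3 - (1 + q ^ 2) * q ^ (n + 2)) * (P * (1 - q * N))\<^sup>2
         * (q powr (- 2 * real (n + 2) - 1/2) * (q * q powr (- 2 * real (n + 1) ^ 2 - 2 * real (n + 1) - 1/2)))"
      unfolding cc_def HH_def hs_def p1 by (simp only: mult_ac)
    then show ?thesis unfolding eB N_def by (simp add: power_add mult_ac power2_eq_square)
  qed
  have R2: "ll (n + 1) * EE n = (1 - q * N)\<^sup>2 * P\<^sup>2 * (q\<^sup>2 * Y) * (Br q n / (1 - q))"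
  proof -
    have "ll (n + 1) * EE n = (1 - q ^ (n + 1))\<^sup>2 * P\<^sup>2 * (q powr (- 4 * real (n + 1)) * q powr (- 2 * (real n + 1)\<^sup>2)) * (Br q n / (1 - q))"
      unfolding ll_def EE_def P_def by (simp only: mult_ac)
    then show ?thesis unfolding eC N_def by simp
  qed
  have key: "Br q (n + 1) / (1 - q) = (1 + q ^ 3 - (1 + q ^ 2) * (q\<^sup>2 * N)) + q\<^sup>2 * (Br q n / (1 - q))"
  proof -
    have "Br q (n + 1) = (1 + q ^ 3 - (1 + q ^ 2) * (q\<^sup>2 * N)) * (1 - q) + q\<^sup>2 * Br q n"
      unfolding b1 b0 by (simp add: algebra_simps power2_eq_square power3_eq_cube)
    then show ?thesis using q10 by (simp add: field_simps)
  qed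
  have ring: "\<And>A M Z. (P * M)\<^sup>2 * Y * (A + q\<^sup>2 * Z) = A * (P * M)\<^sup>2 * Y + M\<^sup>2 * P\<^sup>2 * (q\<^sup>2 * Y) * Z"
    by (simp add: algebra_simps power2_eq_square)
  show ?thesis unfolding L R1 R2 key ring ..
qed

end


definition Pt :: "real \<Rightarrow> nat \<Rightarrow> real poly" where
  "Pt q k = (\<Sum>j\<le>k. monom (cT q k j) j)"

definition mp :: "real \<Rightarrow> nat \<Rightarrow> real poly" where
  "mp q k = smult (1 / cT q k k) (Pt q k)"

context fixes q :: real assumes q0: "0 < q" and q1: "q < 1"
begin

lemma mp_lead: "coeff (mp q k) k = 1"
  unfolding mp_def Pt_def using cT_nz[OF q0 q1, of k] by (simp add: coeff_Psum)

lemma mp_deg: "degree (mp q k) \<le> k"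
  unfolding mp_def Pt_def using deg_Psum[where n=k] degree_smult_le order_trans by blast

lemma mp_zero: "k < j \<Longrightarrow> coeff (mp q k) j = 0"
  using mp_deg[of k] by (simp add: coeff_eq_0)

lemma Lf_mp: "Lf (mom_st q) i (mp q k) = (\<Sum>j\<le>k. cT q k j * mom_st q (i + j)) / cT q k k"
  unfolding mp_def Pt_def Lf_smult Lf_Psum by simp

lemma mp_orth: "i < k \<Longrightarrow> Lf (mom_st q) i (mp q k) = 0"
  unfolding Lf_mp using t_orth_all[OF q0 q1] by simp

lemma mp_H: "Lf (mom_st q) k (mp q k) = HH q k"
  unfolding Lf_mp t_h[OF q0 q1] HH_def[OF q0 q1] ..

lemma mp_E: "Lf (mom_st q) (Suc k) (mp q k) = EE q k"
  unfolding Lf_mp E_closed[OF q0 q1] EE_def[OF q0 q1] ..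

lemma HH_nz: "HH q k \<noteq> 0" unfolding HH_def[OF q0 q1] using hs_pos[OF q0 q1, of k] q0 by simp

lemma mp_uniq: "(\<forall>j\<ge>m. coeff R j = 0) \<Longrightarrow> (\<forall>i<m. Lf (mom_st q) i R = 0) \<Longrightarrow> R = 0"
  by (rule uniq[where p = "mp q"]) (auto simp: mp_lead mp_deg mp_orth mp_H HH_nz)

lemma mp0: "mp q 0 = 1"
  unfolding mp_def Pt_def using cT_nz[OF q0 q1, of 0] by (simp add: monom_0)

lemma mp1: "mp q 1 = [:- cc q 1, 1:] * mp q 0"
proof -
  define R where "R = mp q 1 - [:- cc q 1, 1:] * mp q 0"
  have "R = 0"
  proof (rule mp_uniq[of 1])
    show "\<forall>j\<ge>1. coeff R j = 0"
    proof (intro allI impI)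
      fix j :: nat assume j: "1 \<le> j"
      show "coeff R j = 0"
      proof (cases "j = 1")
        case True then show ?thesis
          unfolding R_def coeff_diff coeff_lin_mult using mp_lead[of 1] mp_lead[of 0] mp_zero[of 0 1] by simp
      next
        case False
        then obtain i where "j = Suc i" "0 < i" using j by (cases j) auto
        then show ?thesis unfolding R_def coeff_diff coeff_lin_mult using mp_zero[of 1 j] mp_zero[of 0 j] mp_zero[of 0 i] by simp
      qed
    qed
    show "\<forall>i<1. Lf (mom_st q) i R = 0"
      unfolding R_def Lf_diff Lf_lin using mp_E[of 0] mp_H[of 0] mp_orth[of 0 1] id3[OF q0 q1] by simp
  qed
  then show ?thesis unfolding R_def by simp
qed

lemma mp_rec: "mp q (n + 2) = [:- cc q (n + 2), 1:] * mp q (n + 1) - smult (ll q (n + 1)) (mp q n)"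
proof -
  define R where "R = mp q (n + 2) - ([:- cc q (n + 2), 1:] * mp q (n + 1) - smult (ll q (n + 1)) (mp q n))"
  have "R = 0"
  proof (rule mp_uniq[of "n + 2"])
    show "\<forall>j\<ge>n + 2. coeff R j = 0"
    proof (intro allI impI)
      fix j :: nat assume j: "n + 2 \<le> j"
      then obtain i where i: "j = Suc i" "n + 1 \<le> i" by (cases j) auto
      show "coeff R j = 0"
      proof (cases "j = n + 2")
        case True then show ?thesis
          unfolding R_def coeff_diff coeff_lin_mult coeff_smult
          using mp_lead[of "n + 2"] mp_lead[of "n + 1"] mp_zero[of "n + 1" "n + 2"] mp_zero[of n "n + 2"] by simp
      next
        case False
        then have "n + 1 < i" using i by simp
        then show ?thesis unfolding R_def coeff_diff coeff_lin_mult coeff_smult i(1)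
          using mp_zero[of "n + 2" "Suc i"] mp_zero[of "n + 1" "Suc i"] mp_zero[of "n + 1" i] mp_zero[of n "Suc i"] by simp
      qed
    qed
    show "\<forall>i<n + 2. Lf (mom_st q) i R = 0"
    proof (intro allI impI)
      fix i assume i: "i < n + 2"
      have L: "Lf (mom_st q) i R = Lf (mom_st q) i (mp q (n + 2))
          - (- cc q (n + 2) * Lf (mom_st q) i (mp q (n + 1)) + Lf (mom_st q) (Suc i) (mp q (n + 1)))
          + ll q (n + 1) * Lf (mom_st q) i (mp q n)"
        unfolding R_def Lf_diff Lf_lin Lf_smult by simp
      consider "i < n" | "i = n" | "i = n + 1" using i by linarith
      then show "Lf (mom_st q) i R = 0"
      proof cases
        case 1 then show ?thesis unfolding L using mp_orth[of i "n + 2"] mp_orth[of i "n + 1"]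
            mp_orth[of "Suc i" "n + 1"] mp_orth[of i n] by simp
      next
        case 2 then show ?thesis unfolding L using mp_orth[of n "n + 2"] mp_orth[of n "n + 1"]
            mp_H[of "n + 1"] mp_H[of n] id1[OF q0 q1, of n] by simp
      next
        case 3 then show ?thesis unfolding L using mp_orth[of "n + 1" "n + 2"] mp_H[of "n + 1"]
            mp_E[of "n + 1"] mp_E[of n] id2[OF q0 q1, of n] by simp
      qed
    qed
  qed
  then show ?thesis unfolding R_def by simp
qed

end


theorem corollary1:
  fixes q :: real
  assumes "0 < q" and "q < 1"
  defines "b \<equiv> (\<lambda>k n::nat. (-1) ^ (n + k) * q powr (real n / 2 + 1/4) * qbinom q n k
                              * q powr (real k ^ 2 + real k / 2) / qpoch q q k)"
      and "Ct \<equiv> (\<lambda>n::nat. (-1) ^ n * q powr (- real n / 2 - 1/4))"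
      and "bt \<equiv> (\<lambda>k n::nat. coeff (orthonormal_poly (mom_st q) n) k)"
      and "pt \<equiv> (\<lambda>n::nat. smult (1 / coeff (orthonormal_poly (mom_st q) n) n)
                                   (orthonormal_poly (mom_st q) n))"
      and "ct \<equiv> (\<lambda>n::nat. (1 + q ^ 3 - (1 + q ^ 2) * q ^ n) * q powr (- 2 * real n - 1/2))"
      and "lt \<equiv> (\<lambda>n::nat. (1 - q ^ n) ^ 2 * q powr (- 4 * real n))"
  shows "(\<forall>n k. k \<le> n \<longrightarrow>
            bt k n = Ct n * (-1) ^ k * qbinom q n k * q powr (real k ^ 2 + real k / 2)
                     / qpoch q q (k + 1) * (1 - q ^ (k + 1) - (1 - q ^ k) * (1 - q ^ (n + 1))))
       \<and> (\<forall>n k. k \<le> n \<longrightarrow>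
            bt k n = b k n * q powr (- real n - 1/2)
                     * (1 - (1 - q ^ k) * (1 - q ^ (n + 1)) / (1 - q ^ (k + 1))))
       \<and> (\<forall>n. hankel_det (mom_st q) (n + 1) = q ^ (n + 1) * hankel_det (mom_s q) (n + 1))
       \<and> pt 0 = 1
       \<and> pt 1 = [:- ct 1, 1:] * pt 0
       \<and> (\<forall>n. pt (n + 2) = [:- ct (n + 2), 1:] * pt (n + 1) - smult (lt (n + 1)) (pt n))"

proof -
  note q0 = assms(1) and q1 = assms(2)
  have Ct0: "Ct n \<noteq> 0" for n unfolding assms(4) using q0 by simp
  have ON: "orthonormal_poly (mom_st q) n = smult (Ct n) (Pt q n)" for n
    unfolding orth_t[OF q0 q1] assms(4) Pt_def ..
  have bt: "bt k n = Ct n * cT q n k" if "k \<le> n" for k n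
    unfolding assms(5) ON using that by (simp add: Pt_def coeff_Psum)
  have ptmp: "pt n = mp q n" for n
  proof -
    have "coeff (orthonormal_poly (mom_st q) n) n = Ct n * cT q n n"
      unfolding ON by (simp add: Pt_def coeff_Psum)
    then show ?thesis unfolding assms(6) mp_def ON using Ct0[of n] by (simp add: smult_smult)
  qed
  have ctcc: "ct = cc q" unfolding assms(7) cc_def[OF q0 q1] ..
  have ltll: "lt = ll q" unfolding assms(8) ll_def[OF q0 q1] ..
  have c1: "\<forall>n k. k \<le> n \<longrightarrow>
            bt k n = Ct n * (-1) ^ k * qbinom q n k * q powr (real k ^ 2 + real k / 2)
                     / qpoch q q (k + 1) * (1 - q ^ (k + 1) - (1 - q ^ k) * (1 - q ^ (n + 1)))"
    by (auto simp: bt cT_def)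
  have c2: "\<forall>n k. k \<le> n \<longrightarrow>
            bt k n = b k n * q powr (- real n - 1/2)
                     * (1 - (1 - q ^ k) * (1 - q ^ (n + 1)) / (1 - q ^ (k + 1)))"
  proof (intro allI impI)
    fix n k :: nat assume k: "k \<le> n"
    have nz: "1 - q ^ (k + 1) \<noteq> 0" using qpow_lt1[OF q0 q1, of k] by simp
    have pk: "qpoch q q k > 0" by (rule qpoch_pos[OF q0 q1])
    have e: "q powr (real n / 2 + 1/4) * q powr (- real n - 1/2) = q powr (- real n / 2 - 1/4)"
      unfolding powr_add[symmetric] by (rule powr_cong[OF q0 q1]) simp
    have br: "1 - (1 - q ^ k) * (1 - q ^ (n + 1)) / (1 - q ^ (k + 1))
        = (1 - q ^ (k + 1) - (1 - q ^ k) * (1 - q ^ (n + 1))) / (1 - q ^ (k + 1))"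
      using nz by (simp add: field_simps)
    have "b k n * q powr (- real n - 1/2) * (1 - (1 - q ^ k) * (1 - q ^ (n + 1)) / (1 - q ^ (k + 1)))
        = (-1) ^ (n + k) * (q powr (real n / 2 + 1/4) * q powr (- real n - 1/2)) * qbinom q n k
          * q powr (real k ^ 2 + real k / 2) / (qpoch q q k * (1 - q ^ (k + 1)))
          * (1 - q ^ (k + 1) - (1 - q ^ k) * (1 - q ^ (n + 1)))"
      unfolding assms(3) br using nz pk by (simp add: field_simps)
    also have "\<dots> = Ct n * cT q n k"
      unfolding e assms(4) cT_def using k by (simp add: qpoch_Suc power_add field_simps)
    finally show "bt k n = b k n * q powr (- real n - 1/2) * (1 - (1 - q ^ k) * (1 - q ^ (n + 1)) / (1 - q ^ (k + 1)))"
      using bt[OF k] by simp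
  qed
  have c3: "\<forall>n. hankel_det (mom_st q) (n + 1) = q ^ (n + 1) * hankel_det (mom_s q) (n + 1)"
    by (simp add: hankel_t[OF q0 q1] hankel_s[OF q0 q1] prod.distrib)
  show ?thesis
    using c1 c2 c3 mp0[OF q0 q1] mp1[OF q0 q1] mp_rec[OF q0 q1]
    unfolding ptmp ctcc ltll by simp
qed

end
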